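(* Let $F$ be a finite field with $q$ elements and $G$ a finite abelian group of order $m$. Let $r\in(0,1)$ and $\delta\in(0,1-q^{-1})$, and for each $n$ put $k=[rn]$ (the integer nearest to $rn$). Let $A$ be uniformly random in $(FG)^{k\times n}$, let $C_A=\{\mathbf{b}A\mid \mathbf{b}\in(FG)^k\}$ and let $\Delta(C_A)$ be its relative distance. If $r<g_q(\delta)$, then $\lim_{n\to\infty}\Pr\big(\Delta(C_A)>\delta\big)=1$, and the convergence is exponential.
   Context: Each element $\sum_{z\in G}a_z z$ of the group algebra $FG$ is identified with the word $(a_z)_{z\in G}\in F^m$, and elements of $(FG)^n$ with concatenated words of length $mn$; Hamming weight is $\mathrm{w}$. For $\mathbf{b}=(b_1,\dots,b_k)$, $\mathbf{b}A=(\sum_i b_ia_{i1},\dots,\sum_i b_ia_{in})$. $\Delta(C_A)=\mathrm{w}(C_A)/(mn)$ with $\mathrm{w}(C_A)$ the minimum weight of nonzero codewords of $C_A$. $h_q(x)=x\log_q(q-1)-x\log_q x-(1-x)\log_q(1-x)$ (with $0\log_q0=0$) and $g_q(x)=1-h_q(x)$. *)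

theory Defs
  imports Complex_Main "HOL-Library.Extended_Real" "HOL-Library.Function_Algebras"
begin

text \<open>Group algebra FG: elements are functions G \<Rightarrow> F (coefficient words indexed by G).
  The finite abelian group G is a finite type of class ab_group_add (written additively),
  F a finite field type.\<close>

definition ga_mult :: "('g::{finite,ab_group_add} \<Rightarrow> 'f::field) \<Rightarrow> ('g \<Rightarrow> 'f) \<Rightarrow> ('g \<Rightarrow> 'f)" where
  "ga_mult x y = (\<lambda>z. \<Sum>u\<in>UNIV. x u * y (z - u))"

text \<open>k \<times> n matrices over FG: functions on indices, zero outside i<k, j<n.\<close>
definition mats :: "nat \<Rightarrow> nat \<Rightarrow> (nat \<Rightarrow> nat \<Rightarrow> ('g::{finite,ab_group_add} \<Rightarrow> 'f::field)) set" where
  "mats k n = {A. \<forall>i j. (k \<le> i \<or> n \<le> j) \<longrightarrow> A i j = 0}"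

definition vecs :: "nat \<Rightarrow> (nat \<Rightarrow> ('g::{finite,ab_group_add} \<Rightarrow> 'f::field)) set" where
  "vecs k = {b. \<forall>i. k \<le> i \<longrightarrow> b i = 0}"

definition vec_mat :: "nat \<Rightarrow> nat \<Rightarrow> (nat \<Rightarrow> ('g::{finite,ab_group_add} \<Rightarrow> 'f::field))
     \<Rightarrow> (nat \<Rightarrow> nat \<Rightarrow> ('g \<Rightarrow> 'f)) \<Rightarrow> (nat \<Rightarrow> ('g \<Rightarrow> 'f))" where
  "vec_mat k n b A = (\<lambda>j. if j < n then (\<Sum>i<k. ga_mult (b i) (A i j)) else 0)"

definition code_of :: "nat \<Rightarrow> nat \<Rightarrow> (nat \<Rightarrow> nat \<Rightarrow> ('g::{finite,ab_group_add} \<Rightarrow> 'f::field))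
     \<Rightarrow> (nat \<Rightarrow> ('g \<Rightarrow> 'f)) set" where
  "code_of k n A = {vec_mat k n b A | b. b \<in> vecs k}"

text \<open>Hamming weight of the concatenated word of length m n.\<close>
definition weight :: "nat \<Rightarrow> (nat \<Rightarrow> ('g::finite \<Rightarrow> 'f::zero)) \<Rightarrow> nat" where
  "weight n c = (\<Sum>j<n. card {z. c j z \<noteq> 0})"

definition min_weight :: "nat \<Rightarrow> (nat \<Rightarrow> ('g::finite \<Rightarrow> 'f::zero)) set \<Rightarrow> enat" where
  "min_weight n C = (INF c \<in> C - {0}. enat (weight n c))"

definition rel_distance :: "nat \<Rightarrow> (nat \<Rightarrow> ('g::finite \<Rightarrow> 'f::zero)) set \<Rightarrow> ereal" where
  "rel_distance n C = ereal_of_enat (min_weight n C) / ereal (real (card (UNIV :: 'g set) * n))"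

definition hq :: "real \<Rightarrow> real \<Rightarrow> real" where
  "hq q x = x * log q (q - 1)
      - (if x = 0 then 0 else x * log q x)
      - (if x = 1 then 0 else (1 - x) * log q (1 - x))"

definition gq :: "real \<Rightarrow> real \<Rightarrow> real" where
  "gq q x = 1 - hq q x"

definition prob_good :: "'f::{finite,field} itself \<Rightarrow> 'g::{finite,ab_group_add} itself
     \<Rightarrow> real \<Rightarrow> real \<Rightarrow> nat \<Rightarrow> real" where
  "prob_good _ _ r \<delta> n =
     (let k = nat (round (r * real n));
          M = (mats k n :: (nat \<Rightarrow> nat \<Rightarrow> ('g \<Rightarrow> 'f)) set)
      in real (card {A \<in> M. rel_distance n (code_of k n A) > ereal \<delta>}) / real (card M))"

end

theory Submission
  imports Defs "HOL-Library.FuncSet"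
begin


lemma ga_mult_add_right: "ga_mult b (x + y) = ga_mult b x + ga_mult b y"
  unfolding ga_mult_def by (auto simp: fun_eq_iff distrib_left sum.distrib)

lemma ga_mult_zero_right: "ga_mult b 0 = 0"
  unfolding ga_mult_def by (auto simp: fun_eq_iff)

lemma ga_mult_diff_right: "ga_mult b (x - y) = ga_mult b x - ga_mult b y"
  unfolding ga_mult_def by (auto simp: fun_eq_iff right_diff_distrib sum_subtractf)

lemma ga_mult_scale: "ga_mult b (\<lambda>z. a * x z) = (\<lambda>z. a * ga_mult b x z)"
  unfolding ga_mult_def by (auto simp: fun_eq_iff sum_distrib_left algebra_simps)

lemma ga_mult_shift: "ga_mult b (\<lambda>z. x (z + g)) = (\<lambda>z. ga_mult b x (z + g))"
  unfolding ga_mult_def by (auto simp: fun_eq_iff algebra_simps)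

lemma ga_mult_delta0: "ga_mult b (\<lambda>w. if w = 0 then 1 else 0) = b"
proof (rule ext)
  fix z
  have "ga_mult b (\<lambda>w. if w = 0 then 1 else 0) z = (\<Sum>u\<in>UNIV. if u = z then b u else 0)"
    unfolding ga_mult_def by (rule sum.cong) auto
  also have "\<dots> = b z" by simp
  finally show "ga_mult b (\<lambda>w. if w = 0 then 1 else 0) z = b z" .
qed



lemma card_field_ge2: "2 \<le> card (UNIV::'f::{finite,field} set)"
proof -
  have "card {0::'f, 1} \<le> card (UNIV::'f set)" by (rule card_mono) auto
  thus ?thesis by simp
qed

lemma hq_identity:
  fixes q d :: real
  assumes q: "2 \<le> q" and d: "0 < d" "d < 1"
  defines "y \<equiv> d / ((q - 1) * (1 - d))"
  shows "ln q * hq q d = - d * ln y - ln (1 - d)"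
proof -
  have lq: "ln q > 0" using q by simp
  have "ln q * hq q d = d * ln (q - 1) - d * ln d - (1 - d) * ln (1 - d)"
    using d lq unfolding hq_def log_def by (simp add: field_simps)
  moreover have ly: "ln y = ln d - ln (q - 1) - ln (1 - d)"
    unfolding y_def using d q by (simp add: ln_div ln_mult)
  moreover have "- d * ln y = - d * ln d + d * ln (q - 1) + d * ln (1 - d)"
    unfolding ly by (simp add: algebra_simps)
  ultimately show ?thesis by (simp add: algebra_simps)
qed

lemma volume_bound:
  fixes X :: "'x set" and \<delta> :: real
  assumes X: "finite X" and d0: "0 < \<delta>" and d1: "\<delta> \<le> 1 - 1 / real (card (UNIV::'f::{finite,field} set))"
  shows "real (card {v \<in> PiE X (\<lambda>_. UNIV::'f set).
            real (\<Sum>x\<in>X. if v x \<noteq> 0 then 1 else 0::nat) \<le> \<delta> * real (card X)})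
         \<le> real (card (UNIV::'f set)) powr (real (card X) * hq (real (card (UNIV::'f set))) \<delta>)"
proof -
  define q where "q = real (card (UNIV::'f set))"
  have q2: "2 \<le> q" unfolding q_def using card_field_ge2[where 'f='f] by linarith
  have dl1: "\<delta> < 1" using d1 q2 unfolding q_def[symmetric] by (smt (verit) divide_pos_pos)
  define y where "y = \<delta> / ((q - 1) * (1 - \<delta>))"
  have y0: "0 < y" unfolding y_def using d0 dl1 q2 by simp
  have "\<delta> \<le> (q - 1) * (1 - \<delta>)"
  proof -
    have "\<delta> * q \<le> q - 1" using d1 q2 unfolding q_def[symmetric] by (simp add: field_simps)
    thus ?thesis by (simp add: algebra_simps)
  qed
  hence y1: "y \<le> 1" unfolding y_def using d0 dl1 q2 by simp
  define N where "N = card X"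
  define wt where "wt v = (\<Sum>x\<in>X. if v x \<noteq> 0 then 1 else 0::nat)" for v :: "'x \<Rightarrow> 'f"
  define B where "B = {v \<in> PiE X (\<lambda>_. UNIV::'f set). real (wt v) \<le> \<delta> * real N}"
  have finP: "finite (PiE X (\<lambda>_. UNIV::'f set))" using X by (simp add: finite_PiE)
  have "real (card B) = (\<Sum>v\<in>B. 1)" by simp
  also have "\<dots> \<le> (\<Sum>v\<in>B. y powr (real (wt v) - \<delta> * N))"
  proof (rule sum_mono)
    fix v assume "v \<in> B"
    hence e: "real (wt v) - \<delta> * N \<le> 0" unfolding B_def by auto
    have "ln y \<le> 0" using y0 y1 by simp
    hence "0 \<le> (real (wt v) - \<delta> * N) * ln y" using e by (simp add: mult_nonpos_nonpos)
    thus "1 \<le> y powr (real (wt v) - \<delta> * N)" using y0 by (simp add: powr_def)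
  qed
  also have "\<dots> \<le> (\<Sum>v\<in>PiE X (\<lambda>_. UNIV::'f set). y powr (real (wt v) - \<delta> * N))"
    by (rule sum_mono2[OF finP]) (auto simp: B_def)
  also have "\<dots> = (\<Sum>v\<in>PiE X (\<lambda>_. UNIV::'f set). y powr (- \<delta> * N) * y ^ wt v)"
    using y0 by (intro sum.cong refl) (simp add: powr_diff powr_realpow powr_minus divide_inverse)
  also have "\<dots> = y powr (- \<delta> * N) * (\<Sum>v\<in>PiE X (\<lambda>_. UNIV::'f set). y ^ wt v)"
    by (simp add: sum_distrib_left)
  also have "(\<Sum>v\<in>PiE X (\<lambda>_. UNIV::'f set). y ^ wt v)
       = (\<Sum>v\<in>PiE X (\<lambda>_. UNIV::'f set). \<Prod>x\<in>X. (\<lambda>x a. if a \<noteq> 0 then y else 1) x (v x))"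
    unfolding wt_def by (intro sum.cong refl) (auto simp add: power_sum if_distrib intro!: prod.cong)
  also have "\<dots> = (\<Prod>x\<in>X. \<Sum>a\<in>UNIV. (if a \<noteq> (0::'f) then y else 1))"
    by (rule prod_sum_PiE[symmetric]) (auto simp: X)
  also have "(\<Sum>a\<in>UNIV. (if a \<noteq> (0::'f) then y else 1)) = 1 + (q - 1) * y"
  proof -
    have "(\<Sum>a\<in>UNIV. (if a \<noteq> (0::'f) then y else 1)) = 1 + (\<Sum>a\<in>UNIV - {0::'f}. (if a \<noteq> 0 then y else 1))"
      by (subst sum.remove[of _ 0]) auto
    also have "(\<Sum>a\<in>UNIV - {0::'f}. (if a \<noteq> 0 then y else 1)) = (\<Sum>a\<in>UNIV - {0::'f}. y)"
      by (rule sum.cong) auto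
    also have "\<dots> = (q - 1) * y" 
      using card_field_ge2[where 'f='f] unfolding q_def by (simp add: card_Diff_singleton of_nat_diff)
    finally show ?thesis .
  qed
  also have "1 + (q - 1) * y = 1 / (1 - \<delta>)"
  proof -
    have "(q - 1) * y = \<delta> / (1 - \<delta>)" unfolding y_def using q2 dl1 by simp
    thus ?thesis using dl1 by (simp add: field_simps)
  qed
  also have "(\<Prod>x\<in>X. 1 / (1 - \<delta>)) = (1 / (1 - \<delta>)) ^ N" unfolding N_def by simp
  also have "y powr (- \<delta> * N) * (1 / (1 - \<delta>)) ^ N = q powr (real N * hq q \<delta>)"
  proof -
    have "y powr (- \<delta> * N) * (1 / (1 - \<delta>)) ^ N = exp (real N * (- \<delta> * ln y - ln (1 - \<delta>)))"
    proof -
      have a: "(1 / (1 - \<delta>)) ^ N = exp (real N * (- ln (1 - \<delta>)))"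
        unfolding exp_of_nat_mult using dl1 by (simp add: exp_minus divide_inverse)
      have b: "y powr (- \<delta> * N) = exp ((- \<delta> * N) * ln y)" using y0 by (simp add: powr_def)
      show ?thesis unfolding a b exp_add[symmetric] by (simp add: algebra_simps)
    qed
    also have "\<dots> = exp (real N * hq q \<delta> * ln q)"
    proof -
      have e: "ln q * hq q \<delta> = - \<delta> * ln y - ln (1 - \<delta>)"
        using hq_identity[OF q2 d0 dl1] unfolding y_def .
      have "real N * hq q \<delta> * ln q = real N * (- \<delta> * ln y - ln (1 - \<delta>))"
        using e by (simp add: mult_ac)
      thus ?thesis by (metis mult.commute)
    qed
    also have "\<dots> = q powr (real N * hq q \<delta>)" using q2 by (simp add: powr_def)
    finally show ?thesis .
  qed
  finally show ?thesis unfolding B_def wt_def N_def q_def .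
qed



definition subsp :: "('g \<Rightarrow> 'f::field) set \<Rightarrow> bool" where
  "subsp J \<longleftrightarrow> 0 \<in> J \<and> (\<forall>x\<in>J. \<forall>y\<in>J. x + y \<in> J) \<and> (\<forall>a. \<forall>x\<in>J. (\<lambda>z. a * x z) \<in> J)"

lemma subsp_diff: assumes "subsp J" "x \<in> J" "y \<in> J" shows "x - y \<in> J"
proof -
  have "(\<lambda>z. (-1) * y z) \<in> J" using assms unfolding subsp_def by blast
  hence "x + (\<lambda>z. (-1) * y z) \<in> J" using assms unfolding subsp_def by blast
  moreover have "x + (\<lambda>z. (-1) * y z) = x - y" by (auto simp: fun_eq_iff)
  ultimately show ?thesis by simp
qed

lemma subsp_lincomb:
  assumes "subsp J" "finite I" "\<And>i. i \<in> I \<Longrightarrow> e i \<in> J"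
  shows "(\<lambda>z. \<Sum>i\<in>I. v i * e i z) \<in> J"
  using assms(2,3)
proof (induction I rule: finite_induct)
  case empty
  then show ?case using assms(1) unfolding subsp_def by (simp add: zero_fun_def)
next
  case (insert a I)
  have "(\<lambda>z. v a * e a z) \<in> J" using insert assms(1) unfolding subsp_def by blast
  moreover have "(\<lambda>z. \<Sum>i\<in>I. v i * e i z) \<in> J" using insert by blast
  ultimately have "(\<lambda>z. v a * e a z) + (\<lambda>z. \<Sum>i\<in>I. v i * e i z) \<in> J"
    using assms(1) unfolding subsp_def by blast
  moreover have "(\<lambda>z. v a * e a z) + (\<lambda>z. \<Sum>i\<in>I. v i * e i z) = (\<lambda>z. \<Sum>i\<in>insert a I. v i * e i z)"
    using insert by (auto simp: fun_eq_iff)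
  ultimately show ?case by simp
qed

lemma info_set:
  fixes J :: "('g::finite \<Rightarrow> 'f::{finite,field}) set"
  assumes J: "subsp J"
  shows "\<exists>I. inj_on (\<lambda>c. restrict c I) J \<and> card J = card (UNIV::'f set) ^ card I"
proof -
  define P where "P I \<longleftrightarrow> inj_on (\<lambda>c. restrict c I) J" for I :: "'g set"
  have "P UNIV" unfolding P_def by (auto simp: inj_on_def restrict_def fun_eq_iff)
  then obtain I where PI: "P I" and Imin: "\<And>I'. P I' \<Longrightarrow> card I \<le> card I'"
    using ex_has_least_nat[of P UNIV card] by blast
  have "\<forall>i\<in>I. \<exists>e. e \<in> J \<and> e i = 1 \<and> (\<forall>i'\<in>I. i' \<noteq> i \<longrightarrow> e i' = 0)"
  proof
    fix i assume iI: "i \<in> I"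
    have "card (I - {i}) < card I" using iI by (meson card_Diff1_less finite)
    hence "\<not> P (I - {i})" using Imin by force
    then obtain c c' where cc: "c \<in> J" "c' \<in> J" "c \<noteq> c'"
        "restrict c (I - {i}) = restrict c' (I - {i})"
      unfolding P_def inj_on_def by blast
    define d where "d = c - c'"
    have dJ: "d \<in> J" unfolding d_def using subsp_diff[OF J cc(1,2)] .
    have d0: "\<forall>i'\<in>I. i' \<noteq> i \<longrightarrow> d i' = 0"
    proof (intro ballI impI)
      fix i' assume "i' \<in> I" "i' \<noteq> i"
      hence "restrict c (I - {i}) i' = restrict c' (I - {i}) i'" using cc(4) by simp
      thus "d i' = 0" using \<open>i' \<in> I\<close> \<open>i' \<noteq> i\<close> by (simp add: d_def restrict_def)
    qed
    have di: "d i \<noteq> 0"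
    proof
      assume "d i = 0"
      hence "restrict c I = restrict c' I" using d0 by (auto simp: d_def restrict_def fun_eq_iff)
      hence "c = c'" using PI cc unfolding P_def inj_on_def by blast
      thus False using cc by simp
    qed
    define e where "e = (\<lambda>z. inverse (d i) * d z)"
    have "e \<in> J" unfolding e_def using J dJ unfolding subsp_def by blast
    moreover have "e i = 1" using di by (simp add: e_def)
    moreover have "\<forall>i'\<in>I. i' \<noteq> i \<longrightarrow> e i' = 0" using d0 by (simp add: e_def)
    ultimately show "\<exists>e. e \<in> J \<and> e i = 1 \<and> (\<forall>i'\<in>I. i' \<noteq> i \<longrightarrow> e i' = 0)" by blast
  qed
  then obtain E where E: "\<And>i. i \<in> I \<Longrightarrow> E i \<in> J \<and> E i i = 1 \<and> (\<forall>i'\<in>I. i' \<noteq> i \<longrightarrow> E i i' = 0)"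
    by metis
  define \<psi> where "\<psi> v = (\<lambda>z. \<Sum>i\<in>I. v i * E i z)" for v :: "'g \<Rightarrow> 'f"
  have \<psi>J: "\<psi> v \<in> J" for v unfolding \<psi>_def by (rule subsp_lincomb[OF J]) (auto simp: E)
  have \<psi>r: "restrict (\<psi> v) I = v" if "v \<in> PiE I (\<lambda>_. UNIV)" for v
  proof (rule ext)
    fix x show "restrict (\<psi> v) I x = v x"
    proof (cases "x \<in> I")
      case True
      have "(\<Sum>i\<in>I. v i * E i x) = (\<Sum>i\<in>I. if i = x then v i else 0)"
        by (rule sum.cong) (use E True in auto)
      also have "\<dots> = v x" using True by simp
      finally show ?thesis using True by (simp add: \<psi>_def)
    next
      case False thus ?thesis using that by (auto simp: PiE_def extensional_def)
    qed
  qed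
  have "card (PiE I (\<lambda>_. UNIV::'f set)) \<le> card J"
  proof (rule card_inj_on_le[of \<psi>])
    show "inj_on \<psi> (PiE I (\<lambda>_. UNIV))" by (metis \<psi>r inj_onI)
  qed (auto simp: \<psi>J)
  moreover have "card J \<le> card (PiE I (\<lambda>_. UNIV::'f set))"
    by (rule card_inj_on_le[of "\<lambda>c. restrict c I"]) (use PI in \<open>auto simp: P_def finite_PiE\<close>)
  moreover have "card (PiE I (\<lambda>_. UNIV::'f set)) = card (UNIV::'f set) ^ card I"
    by (simp add: card_PiE)
  ultimately show ?thesis using PI unfolding P_def by auto
qed



lemma sum_shift_ind:
  fixes f :: "'g::{finite,ab_group_add} \<Rightarrow> 'f::zero"
  shows "(\<Sum>g\<in>UNIV. if f (i + g) \<noteq> 0 then 1 else 0::nat) = card {z. f z \<noteq> 0}"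
proof -
  have "(\<Sum>g\<in>UNIV. if f (i + g) \<noteq> 0 then 1 else 0::nat) = (\<Sum>z\<in>UNIV. if f z \<noteq> 0 then 1 else 0::nat)"
    by (rule sum.reindex_bij_witness[of _ "\<lambda>z. z - i" "\<lambda>g. i + g"]) auto
  also have "\<dots> = card {z. f z \<noteq> 0}" by (simp add: sum.If_cases)
  finally show ?thesis .
qed

lemma finite_supp_fun:
  assumes "finite B"
  shows "finite {c :: nat \<Rightarrow> 'b::zero. (\<forall>j<n. c j \<in> B) \<and> (\<forall>j\<ge>n. c j = 0)}"
proof (rule finite_subset)
  show "{c :: nat \<Rightarrow> 'b::zero. (\<forall>j<n. c j \<in> B) \<and> (\<forall>j\<ge>n. c j = 0)}
        \<subseteq> (\<lambda>f j. if j < n then f j else 0) ` PiE {..<n} (\<lambda>_. B)"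
  proof
    fix c :: "nat \<Rightarrow> 'b" assume c: "c \<in> {c. (\<forall>j<n. c j \<in> B) \<and> (\<forall>j\<ge>n. c j = 0)}"
    have "c = (\<lambda>j. if j < n then restrict c {..<n} j else 0)" using c by (auto simp: fun_eq_iff)
    moreover have "restrict c {..<n} \<in> PiE {..<n} (\<lambda>_. B)" using c by auto
    ultimately show "c \<in> (\<lambda>f j. if j < n then f j else 0) ` PiE {..<n} (\<lambda>_. B)" by blast
  qed
  show "finite ((\<lambda>f j. if j < n then f j else 0) ` PiE {..<n} (\<lambda>_. B))"
    using assms by (intro finite_imageI finite_PiE) auto
qed

lemma count_low_weight:
  fixes J :: "('g::{finite,ab_group_add} \<Rightarrow> 'f::{finite,field}) set" and \<delta> :: real
  assumes J: "subsp J" and sh: "\<And>c g. c \<in> J \<Longrightarrow> (\<lambda>z. c (z + g)) \<in> J"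
    and d0: "0 < \<delta>" and d1: "\<delta> \<le> 1 - 1 / real (card (UNIV::'f set))"
  shows "real (card {c. (\<forall>j<n. c j \<in> J) \<and> (\<forall>j\<ge>n. c j = 0) \<and>
            real (weight n c) \<le> \<delta> * real (card (UNIV::'g set) * n)})
         \<le> real (card (UNIV::'g set)) * real (card J) powr (real n * hq (real (card (UNIV::'f set))) \<delta>)"
proof -
  obtain I where injI: "inj_on (\<lambda>c. restrict c I) J" and cJ: "card J = card (UNIV::'f set) ^ card I"
    using info_set[OF J] by blast
  define m where "m = card (UNIV::'g set)"
  have m0: "0 < m" unfolding m_def by (simp add: finite_UNIV_card_ge_0)
  define q where "q = real (card (UNIV::'f set))"
  define h where "h = hq q \<delta>"
  define X where "X = {..<n} \<times> I"
  have finX: "finite X" unfolding X_def by simp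
  have cX: "card X = n * card I" unfolding X_def by (simp add: card_cartesian_product)
  define Jn where "Jn = {c :: nat \<Rightarrow> 'g \<Rightarrow> 'f. (\<forall>j<n. c j \<in> J) \<and> (\<forall>j\<ge>n. c j = 0)}"
  have finJn: "finite Jn" unfolding Jn_def by (rule finite_supp_fun) simp
  define wg where "wg g c = (\<Sum>p\<in>X. if c (fst p) (snd p + g) \<noteq> 0 then 1 else 0::nat)"
    for g and c :: "nat \<Rightarrow> 'g \<Rightarrow> 'f"
  define \<rho> where "\<rho> g c = restrict (\<lambda>p. c (fst p) (snd p + g)) X" for g and c :: "nat \<Rightarrow> 'g \<Rightarrow> 'f"
  define V where "V = {v \<in> PiE X (\<lambda>_. UNIV::'f set).
            real (\<Sum>x\<in>X. if v x \<noteq> 0 then 1 else 0::nat) \<le> \<delta> * real (card X)}"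
  define Sx where "Sx = {c. (\<forall>j<n. c j \<in> J) \<and> (\<forall>j\<ge>n. c j = 0) \<and>
            real (weight n c) \<le> \<delta> * real (card (UNIV::'g set) * n)}"
  define T where "T g = {c \<in> Jn. real (wg g c) \<le> \<delta> * real (card X)}" for g
  have sumwg: "(\<Sum>g\<in>UNIV. wg g c) = card I * weight n c" for c
  proof -
    have "(\<Sum>g\<in>UNIV. wg g c) = (\<Sum>p\<in>X. \<Sum>g\<in>UNIV. if c (fst p) (snd p + g) \<noteq> 0 then 1 else 0::nat)"
      unfolding wg_def by (rule sum.swap)
    also have "\<dots> = (\<Sum>p\<in>X. card {z. c (fst p) z \<noteq> 0})"
      by (rule sum.cong) (simp_all add: sum_shift_ind)
    also have "\<dots> = (\<Sum>(j,i)\<in>{..<n} \<times> I. card {z. c j z \<noteq> 0})"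
      unfolding X_def by (simp add: case_prod_beta)
    also have "\<dots> = (\<Sum>j<n. \<Sum>i\<in>I. card {z. c j z \<noteq> 0})"
      by (rule sum.cartesian_product[symmetric])
    also have "\<dots> = card I * weight n c" by (simp add: weight_def sum_distrib_left)
    finally show ?thesis .
  qed
  have SxT: "Sx \<subseteq> (\<Union>g\<in>UNIV. T g)"
  proof
    fix c assume cS: "c \<in> Sx"
    have "\<exists>g. m * wg g c \<le> (\<Sum>g\<in>UNIV. wg g c)"
    proof (rule ccontr)
      assume "\<not> ?thesis"
      hence "\<And>g. (\<Sum>g\<in>UNIV. wg g c) < m * wg g c" by (simp add: not_le)
      hence "(\<Sum>g'\<in>(UNIV::'g set). (\<Sum>g\<in>UNIV. wg g c)) < (\<Sum>g\<in>UNIV. m * wg g c)"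
        by (intro sum_strict_mono) auto
      thus False by (simp add: m_def sum_distrib_left)
    qed
    then obtain g where g: "m * wg g c \<le> card I * weight n c" using sumwg by metis
    have "real m * real (wg g c) \<le> real (card I) * real (weight n c)"
      using g by (simp only: of_nat_mult[symmetric] of_nat_le_iff)
    also have "\<dots> \<le> real (card I) * (\<delta> * real (m * n))"
      using cS unfolding Sx_def m_def by (intro mult_left_mono) auto
    finally have "real m * real (wg g c) \<le> real m * (\<delta> * real (card X))"
      unfolding cX by (simp add: algebra_simps)
    hence "real (wg g c) \<le> \<delta> * real (card X)" using m0 by simp
    moreover have "c \<in> Jn" using cS unfolding Sx_def Jn_def by simp
    ultimately show "c \<in> (\<Union>g\<in>UNIV. T g)" unfolding T_def by blast
  qed
  have TV: "card (T g) \<le> card V" for g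
  proof (rule card_inj_on_le[of "\<rho> g"])
    show "inj_on (\<rho> g) (T g)"
    proof (rule inj_onI)
      fix c c' assume c: "c \<in> T g" and c': "c' \<in> T g" and e: "\<rho> g c = \<rho> g c'"
      show "c = c'"
      proof (rule ext)
        fix j show "c j = c' j"
        proof (cases "j < n")
          case True
          have m1: "(\<lambda>z. c j (z + g)) \<in> J" and m2: "(\<lambda>z. c' j (z + g)) \<in> J"
            using c c' True sh unfolding T_def Jn_def by auto
          have m3: "restrict (\<lambda>z. c j (z + g)) I = restrict (\<lambda>z. c' j (z + g)) I"
          proof (rule ext)
            fix i show "restrict (\<lambda>z. c j (z + g)) I i = restrict (\<lambda>z. c' j (z + g)) I i"
            proof (cases "i \<in> I")
              case True
              have "\<rho> g c (j, i) = \<rho> g c' (j, i)" using e by simp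
              thus ?thesis using True \<open>j < n\<close> by (simp add: \<rho>_def X_def)
            qed simp
          qed
          have eq: "(\<lambda>z. c j (z + g)) = (\<lambda>z. c' j (z + g))" using inj_onD[OF injI m3 m1 m2] .
          show ?thesis
          proof
            fix z
            have "c j (z - g + g) = c' j (z - g + g)" using fun_cong[OF eq, of "z - g"] by simp
            thus "c j z = c' j z" by simp
          qed
        next
          case False thus ?thesis using c c' unfolding T_def Jn_def by auto
        qed
      qed
    qed
    show "\<rho> g ` T g \<subseteq> V"
    proof
      fix v assume "v \<in> \<rho> g ` T g"
      then obtain c where c: "c \<in> T g" "v = \<rho> g c" by blast
      have e1: "(\<Sum>x\<in>X. if v x \<noteq> 0 then 1 else 0::nat) = wg g c"
        unfolding c(2) \<rho>_def wg_def by (rule sum.cong) auto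
      have e2: "v \<in> PiE X (\<lambda>_. UNIV)" unfolding c(2) \<rho>_def by auto
      have e3: "real (wg g c) \<le> \<delta> * real (card X)" using c(1) unfolding T_def by simp
      show "v \<in> V" unfolding V_def mem_Collect_eq e1 using e2 e3 by blast
    qed
    show "finite V" unfolding V_def using finX by (simp add: finite_PiE)
  qed
  have "real (card Sx) \<le> real (card (\<Union>g\<in>UNIV. T g))"
  proof (intro of_nat_mono card_mono)
    show "finite (\<Union>g\<in>UNIV. T g)" by (auto simp: T_def finJn)
  qed (rule SxT)
  also have "\<dots> \<le> real (\<Sum>g\<in>UNIV. card (T g))"
    by (intro of_nat_mono card_UN_le) (auto simp: T_def finJn)
  also have "\<dots> \<le> real (\<Sum>g\<in>(UNIV::'g set). card V)" by (intro of_nat_mono sum_mono TV)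
  also have "\<dots> = real m * real (card V)" by (simp add: m_def)
  also have "\<dots> \<le> real m * (q powr (real (card X) * h))"
    unfolding V_def q_def h_def using volume_bound[OF finX d0 d1] m0 by (intro mult_left_mono) auto
  also have "q powr (real (card X) * h) = real (card J) powr (real n * h)"
  proof -
    have q0: "0 < q" unfolding q_def by (simp add: finite_UNIV_card_ge_0)
    have "q powr (real (card X) * h) = (q powr real (card I)) powr (real n * h)"
      unfolding cX by (simp add: powr_powr algebra_simps)
    also have "q powr real (card I) = real (card J)" using q0 unfolding cJ q_def by (simp add: powr_realpow)
    finally show ?thesis .
  qed
  finally show ?thesis unfolding Sx_def m_def h_def q_def .
qed



lemma sum_fun_apply: "(\<Sum>i\<in>A. f i) z = (\<Sum>i\<in>A. f i z)"
  by (induction A rule: infinite_finite_induct) auto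

definition Jb :: "nat \<Rightarrow> (nat \<Rightarrow> ('g::{finite,ab_group_add} \<Rightarrow> 'f::field)) \<Rightarrow> ('g \<Rightarrow> 'f) set" where
  "Jb k b = {(\<Sum>i<k. ga_mult (b i) (x i)) | x. True}"

lemma Jb_I: "(\<Sum>i<k. ga_mult (b i) (x i)) \<in> Jb k b"
  unfolding Jb_def by blast

lemma Jb_subsp: "subsp (Jb k b)"
  unfolding subsp_def
proof (intro conjI ballI allI)
  show "0 \<in> Jb k b" unfolding Jb_def
    by (rule CollectI, rule exI[of _ "\<lambda>_. 0"]) (simp add: ga_mult_zero_right)
next
  fix x y assume "x \<in> Jb k b" "y \<in> Jb k b"
  then obtain u v where "x = (\<Sum>i<k. ga_mult (b i) (u i))" "y = (\<Sum>i<k. ga_mult (b i) (v i))"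
    unfolding Jb_def by blast
  hence "x + y = (\<Sum>i<k. ga_mult (b i) (u i + v i))"
    by (simp add: ga_mult_add_right sum.distrib)
  thus "x + y \<in> Jb k b" by (simp only: Jb_I)
next
  fix a x assume "x \<in> Jb k b"
  then obtain u where u: "x = (\<Sum>i<k. ga_mult (b i) (u i))" unfolding Jb_def by blast
  have "(\<lambda>z. a * x z) = (\<Sum>i<k. ga_mult (b i) (\<lambda>z. a * u i z))"
    unfolding u ga_mult_scale by (simp add: fun_eq_iff sum_fun_apply sum_distrib_left)
  thus "(\<lambda>z. a * x z) \<in> Jb k b" by (simp only: Jb_I)
qed

lemma Jb_shift: "c \<in> Jb k b \<Longrightarrow> (\<lambda>z. c (z + g)) \<in> Jb k b"
proof -
  assume "c \<in> Jb k b"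
  then obtain u where u: "c = (\<Sum>i<k. ga_mult (b i) (u i))" unfolding Jb_def by blast
  have "(\<lambda>z. c (z + g)) = (\<Sum>i<k. ga_mult (b i) (\<lambda>z. u i (z + g)))"
    unfolding u ga_mult_shift by (simp add: fun_eq_iff sum_fun_apply)
  thus ?thesis by (simp only: Jb_I)
qed

lemma Jb_mem: assumes "i < k" shows "b i \<in> Jb k b"
proof -
  define x where "x = (\<lambda>i'. if i' = i then (\<lambda>w::'a. if w = 0 then 1 else (0::'b)) else 0)"
  have "(\<Sum>i'<k. ga_mult (b i') (x i')) = (\<Sum>i'<k. if i' = i then b i else 0)"
    by (rule sum.cong) (auto simp: x_def ga_mult_delta0 ga_mult_zero_right)
  also have "\<dots> = b i" using assms by simp
  finally show ?thesis unfolding Jb_def by (metis (mono_tags, lifting) CollectI)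
qed

lemma vec_mat_diff:
  "vec_mat k n b (A - A') = vec_mat k n b A - vec_mat k n b A'"
  unfolding vec_mat_def by (auto simp: fun_eq_iff ga_mult_diff_right sum_subtractf sum_fun_apply)

lemma mats_diff: "A \<in> mats k n \<Longrightarrow> A' \<in> mats k n \<Longrightarrow> A - A' \<in> mats k n"
  unfolding mats_def by auto

lemma finite_mats: "finite (mats k n :: (nat \<Rightarrow> nat \<Rightarrow> ('g::{finite,ab_group_add} \<Rightarrow> 'f::{finite,field})) set)"
proof -
  let ?R = "{c :: nat \<Rightarrow> ('g \<Rightarrow> 'f). (\<forall>j<n. c j \<in> UNIV) \<and> (\<forall>j\<ge>n. c j = 0)}"
  have fR: "finite ?R" by (rule finite_supp_fun) simp
  have "mats k n \<subseteq> {A :: nat \<Rightarrow> nat \<Rightarrow> ('g \<Rightarrow> 'f). (\<forall>i<k. A i \<in> ?R) \<and> (\<forall>i\<ge>k. A i = 0)}"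
    unfolding mats_def by (auto simp: fun_eq_iff)
  moreover have "finite {A :: nat \<Rightarrow> nat \<Rightarrow> ('g \<Rightarrow> 'f). (\<forall>i<k. A i \<in> ?R) \<and> (\<forall>i\<ge>k. A i = 0)}"
    by (rule finite_supp_fun[OF fR])
  ultimately show ?thesis by (rule finite_subset)
qed

lemma finite_vecs: "finite (vecs k :: (nat \<Rightarrow> ('g::{finite,ab_group_add} \<Rightarrow> 'f::{finite,field})) set)"
proof -
  have "finite {c :: nat \<Rightarrow> ('g \<Rightarrow> 'f). (\<forall>j<k. c j \<in> UNIV) \<and> (\<forall>j\<ge>k. c j = 0)}"
    by (rule finite_supp_fun) simp
  thus ?thesis by (simp add: vecs_def)
qed

lemma image_vec_mat:
  "(\<lambda>A. vec_mat k n b A) ` mats k n = {c. (\<forall>j<n. c j \<in> Jb k b) \<and> (\<forall>j\<ge>n. c j = 0)}"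
proof
  show "(\<lambda>A. vec_mat k n b A) ` mats k n \<subseteq> {c. (\<forall>j<n. c j \<in> Jb k b) \<and> (\<forall>j\<ge>n. c j = 0)}"
    unfolding vec_mat_def Jb_def by auto
next
  show "{c. (\<forall>j<n. c j \<in> Jb k b) \<and> (\<forall>j\<ge>n. c j = 0)} \<subseteq> (\<lambda>A. vec_mat k n b A) ` mats k n"
  proof
    fix c assume c: "c \<in> {c. (\<forall>j<n. c j \<in> Jb k b) \<and> (\<forall>j\<ge>n. c j = 0)}"
    have "\<forall>j. \<exists>x. j < n \<longrightarrow> c j = (\<Sum>i<k. ga_mult (b i) (x i))"
      using c unfolding Jb_def by blast
    then obtain X where X: "\<And>j. j < n \<Longrightarrow> c j = (\<Sum>i<k. ga_mult (b i) (X j i))" by metis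
    define A where "A = (\<lambda>i j. if i < k \<and> j < n then X j i else 0)"
    have "A \<in> mats k n" unfolding A_def mats_def by auto
    moreover have "vec_mat k n b A = c"
    proof (rule ext)
      fix j show "vec_mat k n b A j = c j"
      proof (cases "j < n")
        case True
        have "vec_mat k n b A j = (\<Sum>i<k. ga_mult (b i) (X j i))"
          unfolding vec_mat_def A_def using True by (auto intro!: sum.cong)
        thus ?thesis using X True by simp
      next
        case False thus ?thesis using c by (simp add: vec_mat_def)
      qed
    qed
    ultimately show "c \<in> (\<lambda>A. vec_mat k n b A) ` mats k n" by blast
  qed
qed

lemma card_Jn:
  "card {c :: nat \<Rightarrow> 'b::zero. (\<forall>j<n. c j \<in> J) \<and> (\<forall>j\<ge>n. c j = 0)} = card J ^ n"
proof -
  define Jn where "Jn = {c :: nat \<Rightarrow> 'b::zero. (\<forall>j<n. c j \<in> J) \<and> (\<forall>j\<ge>n. c j = 0)}"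
  have inj: "inj_on (\<lambda>c. restrict c {..<n}) Jn"
  proof (rule inj_onI)
    fix c c' assume c: "c \<in> Jn" and c': "c' \<in> Jn" and e: "restrict c {..<n} = restrict c' {..<n}"
    show "c = c'"
    proof (rule ext)
      fix j show "c j = c' j"
      proof (cases "j < n")
        case True thus ?thesis using fun_cong[OF e, of j] by simp
      next
        case False thus ?thesis using c c' unfolding Jn_def by simp
      qed
    qed
  qed
  have img: "(\<lambda>c. restrict c {..<n}) ` Jn = PiE {..<n} (\<lambda>_. J)"
  proof
    show "(\<lambda>c. restrict c {..<n}) ` Jn \<subseteq> PiE {..<n} (\<lambda>_. J)"
    proof
      fix f assume "f \<in> (\<lambda>c. restrict c {..<n}) ` Jn"
      then obtain c where c: "c \<in> Jn" "f = restrict c {..<n}" by blast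
      have "c \<in> Pi {..<n} (\<lambda>_. J)" using c(1) unfolding Jn_def by auto
      hence "restrict c {..<n} \<in> PiE {..<n} (\<lambda>_. J)" by (simp only: restrict_PiE)
      thus "f \<in> PiE {..<n} (\<lambda>_. J)" using c(2) by simp
    qed
    show "PiE {..<n} (\<lambda>_. J) \<subseteq> (\<lambda>c. restrict c {..<n}) ` Jn"
    proof
      fix f assume f: "f \<in> PiE {..<n} (\<lambda>_. J)"
      define c where "c = (\<lambda>j. if j < n then f j else 0)"
      have "c \<in> Jn" using f unfolding c_def Jn_def by auto
      moreover have "restrict c {..<n} = f"
      proof (rule ext)
        fix j show "restrict c {..<n} j = f j"
          using f by (cases "j < n") (auto simp: c_def PiE_def extensional_def)
      qed
      ultimately show "f \<in> (\<lambda>c. restrict c {..<n}) ` Jn" by force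
    qed
  qed
  have "card Jn = card (PiE {..<n} (\<lambda>_. J))" using card_image[OF inj] img by simp
  thus ?thesis unfolding Jn_def by (simp add: card_PiE)
qed

lemma fiber_count:
  fixes \<phi> :: "'a::ab_group_add \<Rightarrow> 'b::ab_group_add"
  assumes fin: "finite M" and cl: "\<And>x y. x \<in> M \<Longrightarrow> y \<in> M \<Longrightarrow> x - y \<in> M"
    and hom: "\<And>x y. x \<in> M \<Longrightarrow> y \<in> M \<Longrightarrow> \<phi> (x - y) = \<phi> x - \<phi> y"
  shows "card {A\<in>M. \<phi> A \<in> T} * card (\<phi> ` M) = card (T \<inter> \<phi> ` M) * card M"
proof -
  define K where "K = {A\<in>M. \<phi> A = 0}"
  have fib: "card {A\<in>M. \<phi> A = y} = card K" if y: "y \<in> \<phi> ` M" for y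
  proof -
    obtain A0 where A0: "A0 \<in> M" "y = \<phi> A0" using y by blast
    have z: "0 \<in> M" using cl[OF A0(1) A0(1)] by simp
    have nA0: "- A0 \<in> M" using cl[OF z A0(1)] by simp
    have "{A\<in>M. \<phi> A = y} = (\<lambda>B. B + A0) ` K"
    proof
      show "{A\<in>M. \<phi> A = y} \<subseteq> (\<lambda>B. B + A0) ` K"
      proof
        fix A assume A: "A \<in> {A\<in>M. \<phi> A = y}"
        have "A - A0 \<in> K" using A A0 cl hom unfolding K_def by auto
        moreover have "A = (A - A0) + A0" by simp
        ultimately show "A \<in> (\<lambda>B. B + A0) ` K" by blast
      qed
      show "(\<lambda>B. B + A0) ` K \<subseteq> {A\<in>M. \<phi> A = y}"
      proof
        fix A assume "A \<in> (\<lambda>B. B + A0) ` K"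
        then obtain B where B: "B \<in> K" "A = B + A0" by blast
        have BM: "B \<in> M" using B unfolding K_def by simp
        have "A = B - (- A0)" using B by simp
        hence AM: "A \<in> M" using cl[OF BM nA0] by simp
        have "\<phi> (A - A0) = \<phi> A - \<phi> A0" using hom[OF AM A0(1)] .
        moreover have "A - A0 = B" using B by simp
        ultimately have "\<phi> A = \<phi> A0" using B unfolding K_def by simp
        thus "A \<in> {A\<in>M. \<phi> A = y}" using AM A0 by simp
      qed
    qed
    moreover have "inj_on (\<lambda>B. B + A0) K" by (auto simp: inj_on_def)
    ultimately show ?thesis by (simp add: card_image)
  qed
  have gen: "card {A\<in>M. \<phi> A \<in> T'} = card (T' \<inter> \<phi> ` M) * card K" for T'
  proof -
    have eq: "{A\<in>M. \<phi> A \<in> T'} = (\<Union>y\<in>T' \<inter> \<phi> ` M. {A\<in>M. \<phi> A = y})" by auto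
    have "card {A\<in>M. \<phi> A \<in> T'} = (\<Sum>y\<in>T' \<inter> \<phi> ` M. card {A\<in>M. \<phi> A = y})"
      unfolding eq by (rule card_UN_disjoint) (use fin in auto)
    also have "\<dots> = (\<Sum>y\<in>T' \<inter> \<phi> ` M. card K)" by (rule sum.cong) (auto simp: fib)
    finally show ?thesis by simp
  qed
  have "card M = card (\<phi> ` M) * card K" using gen[of UNIV] by simp
  thus ?thesis using gen[of T] by simp
qed



lemma per_b:
  fixes b :: "nat \<Rightarrow> ('g::{finite,ab_group_add} \<Rightarrow> 'f::{finite,field})" and \<delta> :: real and n k :: nat
  assumes d0: "0 < \<delta>" and d1: "\<delta> \<le> 1 - 1 / real (card (UNIV::'f set))"
  defines "S \<equiv> {c :: nat \<Rightarrow> ('g \<Rightarrow> 'f). c \<noteq> 0 \<and> real (weight n c) \<le> \<delta> * real (card (UNIV::'g set) * n)}"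
  shows "real (card {A \<in> mats k n. vec_mat k n b A \<in> S}) \<le> real (card (mats k n :: (nat \<Rightarrow> nat \<Rightarrow> ('g \<Rightarrow> 'f)) set)) *
     (if Jb k b = {0} then 0 else real (card (UNIV::'g set)) *
        real (card (Jb k b)) powr (real n * hq (real (card (UNIV::'f set))) \<delta> - real n))"
proof -
  define M where "M = (mats k n :: (nat \<Rightarrow> nat \<Rightarrow> ('g \<Rightarrow> 'f)) set)"
  define J where "J = Jb k b"
  define Jn where "Jn = {c :: nat \<Rightarrow> ('g \<Rightarrow> 'f). (\<forall>j<n. c j \<in> J) \<and> (\<forall>j\<ge>n. c j = 0)}"
  define h where "h = hq (real (card (UNIV::'f set))) \<delta>"
  have fc: "card {A\<in>M. vec_mat k n b A \<in> S} * card ((\<lambda>A. vec_mat k n b A) ` M) = card (S \<inter> (\<lambda>A. vec_mat k n b A) ` M) * card M"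
    unfolding M_def by (rule fiber_count) (simp_all add: finite_mats mats_diff vec_mat_diff)
  have im: "(\<lambda>A. vec_mat k n b A) ` M = Jn" unfolding M_def Jn_def J_def by (rule image_vec_mat)
  have cJn: "card Jn = card J ^ n" unfolding Jn_def by (rule card_Jn)
  have J0: "0 \<in> J" using Jb_subsp[of k b] unfolding J_def subsp_def by blast
  have cJpos: "0 < card J" using J0 by (auto simp: card_gt_0_iff)
  have eq: "real (card {A\<in>M. vec_mat k n b A \<in> S}) * real (card J) ^ n = real (card (S \<inter> Jn)) * real (card M)"
  proof -
    have "card {A\<in>M. vec_mat k n b A \<in> S} * card J ^ n = card (S \<inter> Jn) * card M"
      using fc unfolding im cJn .
    thus ?thesis by (simp only: of_nat_mult[symmetric] of_nat_power[symmetric])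
  qed
  show ?thesis
  proof (cases "J = {0}")
    case True
    have "S \<inter> Jn = {}"
    proof -
      have "c = 0" if "c \<in> Jn" for c
      proof (rule ext)
        fix j show "c j = 0 j" using that True unfolding Jn_def by (cases "j < n") auto
      qed
      thus ?thesis unfolding S_def by auto
    qed
    hence "real (card {A\<in>M. vec_mat k n b A \<in> S}) = 0" using eq True by simp
    thus ?thesis unfolding M_def J_def[symmetric] using True by simp
  next
    case False
    have "real (card (S \<inter> Jn)) \<le> real (card {c. (\<forall>j<n. c j \<in> J) \<and> (\<forall>j\<ge>n. c j = 0) \<and>
            real (weight n c) \<le> \<delta> * real (card (UNIV::'g set) * n)})"
    proof (intro of_nat_mono card_mono)
      have "finite {c :: nat \<Rightarrow> ('g \<Rightarrow> 'f). (\<forall>j<n. c j \<in> J) \<and> (\<forall>j\<ge>n. c j = 0)}"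
        by (rule finite_supp_fun) simp
      thus "finite {c. (\<forall>j<n. c j \<in> J) \<and> (\<forall>j\<ge>n. c j = 0) \<and>
            real (weight n c) \<le> \<delta> * real (card (UNIV::'g set) * n)}"
        by (rule finite_subset[rotated]) auto
      show "S \<inter> Jn \<subseteq> {c. (\<forall>j<n. c j \<in> J) \<and> (\<forall>j\<ge>n. c j = 0) \<and>
            real (weight n c) \<le> \<delta> * real (card (UNIV::'g set) * n)}"
        unfolding S_def Jn_def by blast
    qed
    also have "\<dots> \<le> real (card (UNIV::'g set)) * real (card J) powr (real n * h)"
      unfolding h_def J_def by (rule count_low_weight[OF Jb_subsp Jb_shift d0 d1])
    finally have cS: "real (card (S \<inter> Jn)) \<le> real (card (UNIV::'g set)) * real (card J) powr (real n * h)" .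
    have pos: "0 < real (card J) ^ n" using cJpos by simp
    have "real (card {A\<in>M. vec_mat k n b A \<in> S}) = real (card (S \<inter> Jn)) * real (card M) / real (card J) ^ n"
      using pos eq by (subst nonzero_eq_divide_eq) auto
    also have "\<dots> \<le> real (card (UNIV::'g set)) * real (card J) powr (real n * h) * real (card M) / real (card J) ^ n"
      using cS pos by (intro divide_right_mono mult_right_mono) auto
    also have "\<dots> = real (card M) * (real (card (UNIV::'g set)) * real (card J) powr (real n * h - real n))"
      using cJpos by (simp add: powr_diff powr_realpow field_simps)
    finally show ?thesis using False unfolding M_def J_def h_def by simp
  qed
qed



lemma card_fiber_Jb:
  fixes J :: "('g::{finite,ab_group_add} \<Rightarrow> 'f::{finite,field}) set"
  shows "card {b \<in> vecs k. Jb k b = J} \<le> card J ^ k"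
proof -
  have "card {b \<in> vecs k. Jb k b = J} \<le> card (PiE {..<k} (\<lambda>_. J))"
  proof (rule card_inj_on_le[of "\<lambda>b. restrict b {..<k}"])
    show "inj_on (\<lambda>b. restrict b {..<k}) {b \<in> vecs k. Jb k b = J}"
    proof (rule inj_onI)
      fix b b' assume b: "b \<in> {b \<in> vecs k. Jb k b = J}" and b': "b' \<in> {b \<in> vecs k. Jb k b = J}"
        and e: "restrict b {..<k} = restrict b' {..<k}"
      show "b = b'"
      proof (rule ext)
        fix i show "b i = b' i"
        proof (cases "i < k")
          case True thus ?thesis using fun_cong[OF e, of i] by simp
        next
          case False thus ?thesis using b b' unfolding vecs_def by simp
        qed
      qed
    qed
    show "(\<lambda>b. restrict b {..<k}) ` {b \<in> vecs k. Jb k b = J} \<subseteq> PiE {..<k} (\<lambda>_. J)"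
    proof
      fix f assume "f \<in> (\<lambda>b. restrict b {..<k}) ` {b \<in> vecs k. Jb k b = J}"
      then obtain b where b: "b \<in> vecs k" "Jb k b = J" "f = restrict b {..<k}" by blast
      have "b \<in> Pi {..<k} (\<lambda>_. J)" using Jb_mem[of _ k b] b(2) by auto
      hence "restrict b {..<k} \<in> PiE {..<k} (\<lambda>_. J)" by (simp only: restrict_PiE)
      thus "f \<in> PiE {..<k} (\<lambda>_. J)" using b(3) by simp
    qed
    show "finite (PiE {..<k} (\<lambda>_. J))" by (simp add: finite_PiE)
  qed
  thus ?thesis by (simp add: card_PiE)
qed

lemma bad_bound:
  fixes \<delta> :: real and n k :: nat
  assumes d0: "0 < \<delta>" and d1: "\<delta> \<le> 1 - 1 / real (card (UNIV::'f::{finite,field} set))"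
    and E: "real k + real n * hq (real (card (UNIV::'f set))) \<delta> - real n \<le> 0"
  defines "S \<equiv> {c :: nat \<Rightarrow> ('g::{finite,ab_group_add} \<Rightarrow> 'f). c \<noteq> 0 \<and> real (weight n c) \<le> \<delta> * real (card (UNIV::'g set) * n)}"
  shows "real (card {A \<in> mats k n. \<exists>b\<in>vecs k. vec_mat k n b A \<in> S})
     \<le> real (card (mats k n :: (nat \<Rightarrow> nat \<Rightarrow> ('g \<Rightarrow> 'f)) set)) *
        (real (card (UNIV::'g set)) * real (card (UNIV :: ('g \<Rightarrow> 'f) set set)) *
         2 powr (real k + real n * hq (real (card (UNIV::'f set))) \<delta> - real n))"
proof -
  define M where "M = (mats k n :: (nat \<Rightarrow> nat \<Rightarrow> ('g \<Rightarrow> 'f)) set)"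
  define V where "V = (vecs k :: (nat \<Rightarrow> ('g \<Rightarrow> 'f)) set)"
  define h where "h = hq (real (card (UNIV::'f set))) \<delta>"
  define m where "m = real (card (UNIV::'g set))"
  define Ee where "Ee = real k + real n * h - real n"
  define t where "t J = (if J = {0} then 0 else m * real (card J) powr (real n * h - real n))"
    for J :: "('g \<Rightarrow> 'f) set"
  have finV: "finite V" unfolding V_def by (rule finite_vecs)
  have finM: "finite M" unfolding M_def by (rule finite_mats)
  have m0: "0 \<le> m" unfolding m_def by simp
  have "{A \<in> M. \<exists>b\<in>V. vec_mat k n b A \<in> S} = (\<Union>b\<in>V. {A\<in>M. vec_mat k n b A \<in> S})" by auto
  hence "real (card {A \<in> M. \<exists>b\<in>V. vec_mat k n b A \<in> S}) \<le> real (\<Sum>b\<in>V. card {A\<in>M. vec_mat k n b A \<in> S})"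
    by (simp only:) (intro of_nat_mono card_UN_le finV)
  also have "\<dots> = (\<Sum>b\<in>V. real (card {A\<in>M. vec_mat k n b A \<in> S}))" by simp
  also have "\<dots> \<le> (\<Sum>b\<in>V. real (card M) * t (Jb k b))"
    unfolding M_def t_def m_def h_def S_def by (intro sum_mono per_b[OF d0 d1])
  also have "\<dots> = real (card M) * (\<Sum>b\<in>V. t (Jb k b))" by (simp add: sum_distrib_left)
  also have "(\<Sum>b\<in>V. t (Jb k b)) = (\<Sum>J\<in>Jb k ` V. \<Sum>b\<in>{b\<in>V. Jb k b = J}. t (Jb k b))"
    by (rule sum.image_gen[OF finV])
  also have "\<dots> = (\<Sum>J\<in>Jb k ` V. real (card {b\<in>V. Jb k b = J}) * t J)"
    by (rule sum.cong) auto
  also have "\<dots> \<le> (\<Sum>J\<in>Jb k ` V. m * 2 powr Ee)"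
  proof (rule sum_mono)
    fix J assume "J \<in> Jb k ` V"
    show "real (card {b\<in>V. Jb k b = J}) * t J \<le> m * 2 powr Ee"
    proof (cases "J = {0}")
      case True thus ?thesis using m0 by (simp add: t_def)
    next
      case False
      have "0 \<in> J" using \<open>J \<in> Jb k ` V\<close> Jb_subsp unfolding subsp_def by blast
      then obtain x where x: "x \<in> J" "x \<noteq> 0" using False by blast
      have "card {0, x} \<le> card J" using \<open>0 \<in> J\<close> x by (intro card_mono) auto
      hence c2: "2 \<le> real (card J)" using x by simp
      have "real (card {b\<in>V. Jb k b = J}) \<le> real (card J) ^ k"
        using card_fiber_Jb[of k J] unfolding V_def by (simp only: of_nat_power[symmetric] of_nat_le_iff)
      hence "real (card {b\<in>V. Jb k b = J}) * t J \<le> real (card J) ^ k * t J"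
        using m0 by (intro mult_right_mono) (auto simp: t_def)
      also have "\<dots> = m * (real (card J) powr real k * real (card J) powr (real n * h - real n))"
        using False c2 unfolding t_def by (simp add: powr_realpow)
      also have "\<dots> = m * real (card J) powr (real k + (real n * h - real n))"
        by (simp only: powr_add[symmetric])
      also have "\<dots> = m * real (card J) powr Ee"
        unfolding Ee_def by (simp add: algebra_simps)
      also have "\<dots> \<le> m * 2 powr Ee"
        using E c2 m0 unfolding Ee_def h_def by (intro mult_left_mono powr_mono2') auto
      finally show ?thesis .
    qed
  qed
  also have "\<dots> = real (card (Jb k ` V)) * (m * 2 powr Ee)" by simp
  also have "\<dots> \<le> real (card (UNIV :: ('g \<Rightarrow> 'f) set set)) * (m * 2 powr Ee)"
    using m0 by (intro mult_right_mono of_nat_mono card_mono) auto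
  finally have "real (card {A \<in> M. \<exists>b\<in>V. vec_mat k n b A \<in> S}) \<le>
      real (card M) * (real (card (UNIV :: ('g \<Rightarrow> 'f) set set)) * (m * 2 powr Ee))"
    by (simp add: mult_left_mono)
  thus ?thesis unfolding M_def V_def m_def Ee_def h_def by (simp add: algebra_simps)
qed



lemma low_weight_exists:
  fixes A :: "nat \<Rightarrow> nat \<Rightarrow> ('g::{finite,ab_group_add} \<Rightarrow> 'f::{finite,field})"
  assumes n: "1 \<le> n" and nd: "\<not> (rel_distance n (code_of k n A) > ereal \<delta>)"
  shows "\<exists>b\<in>vecs k. vec_mat k n b A \<in> {c :: nat \<Rightarrow> ('g \<Rightarrow> 'f). c \<noteq> 0 \<and>
            real (weight n c) \<le> \<delta> * real (card (UNIV::'g set) * n)}"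
proof -
  define C where "C = code_of k n A"
  have Cim: "C = (\<lambda>b. vec_mat k n b A) ` vecs k" unfolding C_def code_of_def by auto
  have finC: "finite C" unfolding Cim by (intro finite_imageI finite_vecs)
  define mn where "mn = real (card (UNIV::'g set) * n)"
  have mn0: "0 < mn" unfolding mn_def using n by (simp add: finite_UNIV_card_ge_0)
  show ?thesis
  proof (cases "C - {0} = {}")
    case True
    have "min_weight n C = \<infinity>" unfolding min_weight_def True by (simp add: top_enat_def)
    hence "rel_distance n C = \<infinity>" unfolding rel_distance_def mn_def[symmetric] using mn0 by simp
    thus ?thesis using nd unfolding C_def[symmetric] by simp
  next
    case False
    define W where "W = (\<lambda>c. enat (weight n c)) ` (C - {0})"
    have fW: "finite W" "W \<noteq> {}" unfolding W_def using finC False by auto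
    have "Inf W \<in> W" using Min_in[OF fW] Min_Inf[OF fW] by simp
    then obtain c where c: "c \<in> C - {0}" "min_weight n C = enat (weight n c)"
      unfolding min_weight_def W_def by auto
    have "rel_distance n C = ereal (real (weight n c) / mn)"
      unfolding rel_distance_def c(2) mn_def[symmetric] using mn0 by simp
    hence "real (weight n c) / mn \<le> \<delta>" using nd unfolding C_def[symmetric] by simp
    hence "real (weight n c) \<le> \<delta> * mn" using mn0 by (simp add: divide_le_eq)
    moreover obtain b where "b \<in> vecs k" "c = vec_mat k n b A" using c(1) unfolding Cim by blast
    ultimately show ?thesis using c(1) unfolding mn_def by auto
  qed
qed



theorem corollary4p2:
  fixes r \<delta> :: real
  assumes "0 < r" "r < 1"
    and "0 < \<delta>" "\<delta> < 1 - 1 / real (card (UNIV :: 'f::{finite,field} set))"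
    and "r < gq (real (card (UNIV :: 'f set))) \<delta>"
  shows "(\<lambda>n. prob_good TYPE('f) TYPE('g::{finite,ab_group_add}) r \<delta> n) \<longlonglongrightarrow> 1
    \<and> (\<exists>c>0. \<exists>N. \<forall>n\<ge>N. 1 - prob_good TYPE('f) TYPE('g) r \<delta> n \<le> exp (- c * real n))"
proof -
  define q where "q = real (card (UNIV::'f set))"
  define h where "h = hq q \<delta>"
  define \<epsilon> where "\<epsilon> = 1 - h - r"
  have \<epsilon>0: "0 < \<epsilon>" using assms(5) unfolding gq_def \<epsilon>_def h_def q_def by simp
  define m where "m = real (card (UNIV::'g set))"
  define K where "K = real (card (UNIV :: ('g \<Rightarrow> 'f) set set))"
  define C where "C = m * K * 2 powr (1/2)"
  have m0: "0 < m" unfolding m_def by (simp add: finite_UNIV_card_ge_0)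
  have K0: "0 < K" unfolding K_def by (simp add: finite_UNIV_card_ge_0)
  have C0: "0 < C" unfolding C_def using m0 K0 by simp
  define P where "P n = prob_good TYPE('f) TYPE('g) r \<delta> n" for n
  have d1: "\<delta> \<le> 1 - 1 / real (card (UNIV::'f set))" using assms(4) by simp
  have Pgen: "P n \<le> 1 \<and> (1 \<le> n \<longrightarrow> 1/2 - \<epsilon> * real n \<le> 0 \<longrightarrow> 1 - P n \<le> C * exp (- (\<epsilon> * ln 2) * real n))" for n
  proof -
    define k where "k = nat (round (r * real n))"
    define M where "M = (mats k n :: (nat \<Rightarrow> nat \<Rightarrow> ('g \<Rightarrow> 'f)) set)"
    define G where "G = {A \<in> M. rel_distance n (code_of k n A) > ereal \<delta>}"
    have PG: "P n = real (card G) / real (card M)"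
      unfolding P_def prob_good_def Let_def G_def M_def k_def by simp
    have finM: "finite M" unfolding M_def by (rule finite_mats)
    have "0 \<in> M" unfolding M_def mats_def by simp
    hence cM: "0 < card M" using finM by (auto simp: card_gt_0_iff)
    have GM: "G \<subseteq> M" unfolding G_def by auto
    have cGM: "card G \<le> card M" using GM finM by (rule card_mono[rotated])
    have P1: "P n \<le> 1" unfolding PG using cM cGM by simp
    have "1 - P n \<le> C * exp (- (\<epsilon> * ln 2) * real n)" if n1: "1 \<le> n" and ne: "1/2 - \<epsilon> * real n \<le> 0"
    proof -
      define S where "S = {c :: nat \<Rightarrow> ('g \<Rightarrow> 'f). c \<noteq> 0 \<and> real (weight n c) \<le> \<delta> * real (card (UNIV::'g set) * n)}"
      have rk: "real k \<le> r * real n + 1/2"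
      proof -
        have "0 \<le> r * real n" using assms(1) by simp
        hence "0 \<le> round (r * real n)" using round_mono[of 0 "r * real n"] by simp
        hence "real k = of_int (round (r * real n))" unfolding k_def by simp
        thus ?thesis using of_int_round_le[of "r * real n"] by simp
      qed
      have E: "real k + real n * h - real n \<le> 1/2 - \<epsilon> * real n"
        using rk unfolding \<epsilon>_def by (simp add: algebra_simps)
      have "1 - P n = real (card (M - G)) / real (card M)"
      proof -
        have "card (M - G) = card M - card G" using card_Diff_subset[OF finite_subset[OF GM finM] GM] .
        hence "real (card (M - G)) = real (card M) - real (card G)" using cGM by (simp add: of_nat_diff)
        thus ?thesis unfolding PG using cM by (simp add: field_simps)
      qed
      also have "\<dots> \<le> real (card {A \<in> M. \<exists>b\<in>vecs k. vec_mat k n b A \<in> S}) / real (card M)"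
      proof (intro divide_right_mono of_nat_mono card_mono)
        show "finite {A \<in> M. \<exists>b\<in>vecs k. vec_mat k n b A \<in> S}" using finM by simp
        show "M - G \<subseteq> {A \<in> M. \<exists>b\<in>vecs k. vec_mat k n b A \<in> S}"
          using low_weight_exists[OF n1] unfolding G_def S_def by blast
      qed simp
      also have "\<dots> \<le> m * K * 2 powr (real k + real n * h - real n)"
      proof -
        have "real (card {A \<in> M. \<exists>b\<in>vecs k. vec_mat k n b A \<in> S}) \<le> real (card M) * (m * K * 2 powr (real k + real n * h - real n))"
          unfolding M_def S_def m_def K_def h_def q_def
          by (rule bad_bound[OF assms(3) d1]) (use E ne in \<open>simp add: h_def q_def\<close>)
        thus ?thesis using cM by (simp add: divide_le_eq mult.commute)
      qed
      also have "\<dots> \<le> m * K * 2 powr (1/2 - \<epsilon> * real n)"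
        using m0 K0 E by (intro mult_left_mono powr_mono) auto
      also have "\<dots> = C * exp (- (\<epsilon> * ln 2) * real n)"
      proof -
        have "(2::real) powr (1/2 - \<epsilon> * real n) = exp ((1/2) * ln 2 + (- (\<epsilon> * ln 2) * real n))"
          by (simp add: powr_def algebra_simps)
        also have "\<dots> = 2 powr (1/2) * exp (- (\<epsilon> * ln 2) * real n)"
          by (simp only: exp_add) (simp add: powr_def)
        finally show ?thesis unfolding C_def by simp
      qed
      finally show ?thesis .
    qed
    thus ?thesis using P1 by blast
  qed
  define c where "c = \<epsilon> * ln 2 / 2"
  have c0: "0 < c" unfolding c_def using \<epsilon>0 by simp
  define N where "N = max (max 1 (nat \<lceil>1 / (2 * \<epsilon>)\<rceil>)) (nat \<lceil>ln C / c\<rceil>)"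
  have main: "1 - P n \<le> exp (- c * real n)" if "N \<le> n" for n
  proof -
    have n1: "1 \<le> n" using that unfolding N_def by simp
    have "1 / (2 * \<epsilon>) \<le> real n" using that unfolding N_def by linarith
    hence ne: "1/2 - \<epsilon> * real n \<le> 0" using \<epsilon>0 by (simp add: field_simps)
    have "ln C / c \<le> real n" using that unfolding N_def by linarith
    hence lnC: "ln C \<le> c * real n" using c0 by (simp add: field_simps)
    have b1: "1 - P n \<le> C * exp (- (\<epsilon> * ln 2) * real n)" using Pgen n1 ne by blast
    have b2: "C * exp (- (\<epsilon> * ln 2) * real n) = C * exp (- c * real n) * exp (- c * real n)"
      unfolding c_def by (simp add: exp_add[symmetric] algebra_simps)
    have b3: "C * exp (- c * real n) \<le> 1"
    proof -
      have "C = exp (ln C)" using C0 by simp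
      also have "\<dots> \<le> exp (c * real n)" using lnC by simp
      finally show ?thesis by (simp add: exp_minus field_simps)
    qed
    have b4: "0 \<le> C * exp (- c * real n)" using C0 by simp
    have b5: "C * exp (- c * real n) * exp (- c * real n) \<le> exp (- c * real n)"
      using b3 b4 by (intro mult_left_le_one_le) auto
    show ?thesis using b1 unfolding b2 using b5 by linarith
  qed
  have lim: "P \<longlonglongrightarrow> 1"
  proof (rule tendsto_sandwich[of "\<lambda>n. 1 - exp (- c * real n)" _ _ "\<lambda>n. 1"])
    show "\<forall>\<^sub>F n in sequentially. 1 - exp (- c * real n) \<le> P n"
      using main by (intro eventually_sequentiallyI[of N]) (smt (verit))
    show "\<forall>\<^sub>F n in sequentially. P n \<le> 1" using Pgen by simp
    show "(\<lambda>n. 1::real) \<longlonglongrightarrow> 1" by simp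
    have "(\<lambda>n. exp (- c) ^ n) \<longlonglongrightarrow> 0" using c0 by (intro LIMSEQ_power_zero) simp
    hence "(\<lambda>n. exp (- c * real n)) \<longlonglongrightarrow> 0"
      by (simp add: exp_of_nat_mult[symmetric] mult.commute)
    hence "(\<lambda>n. 1 - exp (- c * real n)) \<longlonglongrightarrow> 1 - 0" by (intro tendsto_diff) auto
    thus "(\<lambda>n. 1 - exp (- c * real n)) \<longlonglongrightarrow> 1" by simp
  qed
  show ?thesis using lim main c0 unfolding P_def by blast
qed


end
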